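(* Let $S=S^{\top}\in\mathbb{R}^{n\times n}$ be a nonnegative irreducible symmetric matrix and $K=-K^{\top}\in\mathbb{R}^{n\times n}$ a skew-symmetric matrix such that $A=S+K\ge0$ (entrywise). Let $Q$ be a real orthogonal matrix such that $Q^{\top}SQ=\mathrm{diag}(r(S),\lambda_2,\dots,\lambda_n)$. Then $t\mapsto r\big((1-t)A+tA^{\top}\big)$ is constant on $t\in[0,1]$ if and only if $$Q^{\top}KQ=\begin{pmatrix}0 & \mathbf{0}^{\top}\\ \mathbf{0} & K_2\end{pmatrix}$$ for some skew-symmetric $K_2=-K_2^{\top}\in\mathbb{R}^{(n-1)\times(n-1)}$, where $\mathbf{0}\in\mathbb{R}^{n-1}$ is the zero vector.
   Context: $r(M)$ denotes the spectral radius of $M$; $\lambda_2,\dots,\lambda_n$ are the remaining eigenvalues of $S$. *)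

theory Defs
  imports "Jordan_Normal_Form.Spectral_Radius"
begin

text \<open>Irreducibility of a square matrix (Horn--Johnson convention via the directed
graph of the matrix): for n >= 2, A is irreducible iff its directed graph on the
vertices 0..n-1 (edge i -> j iff A(i,j) is nonzero) is strongly connected;
every 1 x 1 matrix counts as irreducible here (that case is trivial for the theorem).\<close>

definition mat_graph :: "real mat \<Rightarrow> (nat \<times> nat) set" where
  "mat_graph A = {(i, j). i < dim_row A \<and> j < dim_row A \<and> A $$ (i, j) \<noteq> 0}"

definition irreducible_mat :: "real mat \<Rightarrow> bool" where
  "irreducible_mat A \<longleftrightarrow> square_mat A \<and>
     (\<forall>i < dim_row A. \<forall>j < dim_row A. i \<noteq> j \<longrightarrow> (i, j) \<in> (mat_graph A)\<^sup>+)"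

definition nonneg_mat :: "real mat \<Rightarrow> bool" where
  "nonneg_mat A \<longleftrightarrow> (\<forall>i < dim_row A. \<forall>j < dim_col A. A $$ (i, j) \<ge> 0)"

definition real_spectral_radius :: "real mat \<Rightarrow> real" where
  "real_spectral_radius A = spectral_radius (map_mat complex_of_real A)"

end

theory Submission
  imports Defs
begin

lemma mm_idx: assumes "A \<in> carrier_mat nr m" "B \<in> carrier_mat m nc" "i < nr" "j < nc"
  shows "(A * B) $$ (i,j) = (\<Sum>k<m. A $$ (i,k) * B $$ (k,j))"
  using assms by (simp add: scalar_prod_def lessThan_atLeast0)

lemma real_eig_le:
  fixes M :: "real mat"
  assumes M: "M \<in> carrier_mat n n" and x: "x \<in> carrier_vec n" and x0: "x \<noteq> 0\<^sub>v n"
    and Mx: "M *\<^sub>v x = lam \<cdot>\<^sub>v x"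
  shows "\<bar>lam\<bar> \<le> real_spectral_radius M"
proof -
  have n: "n > 0" using x x0 by (metis carrier_vecD eq_vecI gr0I index_zero_vec(2) less_nat_zero_code)
  let ?M = "map_mat complex_of_real M" and ?x = "map_vec complex_of_real x"
  have "?M *\<^sub>v ?x = map_vec complex_of_real (M *\<^sub>v x)"
    using of_real_hom.mult_mat_vec_hom[OF M x] by metis
  also have "\<dots> = complex_of_real lam \<cdot>\<^sub>v ?x" unfolding Mx by (intro eq_vecI, auto)
  finally have "eigenvector ?M ?x (complex_of_real lam)"
    unfolding eigenvector_def using x x0 M by (auto simp: vec_eq_iff)
  hence "complex_of_real lam \<in> spectrum ?M" unfolding spectrum_def eigenvalue_def by auto
  hence "norm (complex_of_real lam) \<le> spectral_radius ?M"
    using spectral_radius_mem_max(2)[of ?M n] M n by (intro spectral_radius_mem_max(2)[of ?M n]) (auto intro!: image_eqI[where x="complex_of_real lam"])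
  thus ?thesis unfolding real_spectral_radius_def by simp
qed

lemma eig_bound:
  fixes M :: "real mat"
  assumes M: "M \<in> carrier_mat n n" and ev: "eigenvector (map_mat complex_of_real M) z mu"
    and i: "i < n"
  shows "norm mu * norm (z $ i) \<le> (\<Sum>j<n. \<bar>M $$ (i,j)\<bar> * norm (z $ j))"
proof -
  from ev M have z: "z \<in> carrier_vec n" and Mz: "map_mat complex_of_real M *\<^sub>v z = mu \<cdot>\<^sub>v z"
    unfolding eigenvector_def by auto
  have "mu * z $ i = (map_mat complex_of_real M *\<^sub>v z) $ i" using Mz i z by simp
  also have "\<dots> = (\<Sum>j<n. complex_of_real (M $$ (i,j)) * z $ j)"
    using M z i by (simp add: scalar_prod_def lessThan_atLeast0)
  finally have "norm (mu * z $ i) = norm (\<Sum>j<n. complex_of_real (M $$ (i,j)) * z $ j)" by simp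
  also have "\<dots> \<le> (\<Sum>j<n. norm (complex_of_real (M $$ (i,j)) * z $ j))" by (rule norm_sum)
  also have "\<dots> = (\<Sum>j<n. \<bar>M $$ (i,j)\<bar> * norm (z $ j))" by (simp add: norm_mult)
  finally show ?thesis by (simp add: norm_mult)
qed

locale pfctx =
  fixes S Q :: "real mat" and n :: nat
  assumes S: "S \<in> carrier_mat n n" and S_sym: "transpose_mat S = S"
    and Q: "Q \<in> carrier_mat n n" and Q_orth: "transpose_mat Q * Q = 1\<^sub>m n"
    and Q_diag: "\<forall>i < n. \<forall>j < n. i \<noteq> j \<longrightarrow> (transpose_mat Q * S * Q) $$ (i, j) = 0"
    and Q_first: "(transpose_mat Q * S * Q) $$ (0, 0) = real_spectral_radius S"
begin

abbreviation "rho \<equiv> real_spectral_radius S"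
definition "D = transpose_mat Q * S * Q"
definition "d k = D $$ (k,k)"

lemma QQt: "Q * transpose_mat Q = 1\<^sub>m n"
  using mat_mult_left_right_inverse[of "transpose_mat Q" n Q] Q Q_orth by simp

lemma D: "D \<in> carrier_mat n n" unfolding D_def using S Q by auto

lemma D_diag: "i < n \<Longrightarrow> j < n \<Longrightarrow> i \<noteq> j \<Longrightarrow> D $$ (i,j) = 0"
  unfolding D_def using Q_diag by blast

lemma SQ: "S * Q = Q * D"
proof -
  have Qt: "transpose_mat Q \<in> carrier_mat n n" using Q by simp
  have "Q * D = Q * ((transpose_mat Q * S) * Q)" unfolding D_def ..
  also have "\<dots> = (Q * (transpose_mat Q * S)) * Q"
    using Q Qt S by (intro assoc_mult_mat[symmetric]) auto
  also have "Q * (transpose_mat Q * S) = (Q * transpose_mat Q) * S"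
    using Q Qt S by (intro assoc_mult_mat[symmetric]) auto
  finally have "Q * D = (Q * transpose_mat Q) * S * Q" .
  thus ?thesis unfolding QQt using S by simp
qed

lemma QD_idx: assumes "i < n" "l < n" shows "(Q * D) $$ (i,l) = Q $$ (i,l) * d l"
proof -
  have "(Q * D) $$ (i,l) = (\<Sum>k<n. Q $$ (i,k) * D $$ (k,l))"
    using assms Q D by (simp add: scalar_prod_def lessThan_atLeast0)
  also have "\<dots> = (\<Sum>k\<in>{l}. Q $$ (i,k) * D $$ (k,l))"
    by (rule sum.mono_neutral_right) (use assms D_diag in auto)
  finally show ?thesis by (simp add: d_def)
qed

lemma O1: assumes "i < n" "k < n" shows "(\<Sum>j<n. Q $$ (j,i) * Q $$ (j,k)) = (if i = k then 1 else 0)"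
proof -
  have "(transpose_mat Q * Q) $$ (i,k) = (\<Sum>j<n. Q $$ (j,i) * Q $$ (j,k))"
    using assms Q by (simp add: scalar_prod_def lessThan_atLeast0)
  thus ?thesis using Q_orth assms by simp
qed

lemma O2: assumes "i < n" "k < n" shows "(\<Sum>j<n. Q $$ (i,j) * Q $$ (k,j)) = (if i = k then 1 else 0)"
proof -
  have "(Q * transpose_mat Q) $$ (i,k) = (\<Sum>j<n. Q $$ (i,j) * Q $$ (k,j))"
    using assms Q by (simp add: scalar_prod_def lessThan_atLeast0)
  thus ?thesis using QQt assms by simp
qed

lemma S_idx: assumes "i < n" "j < n" shows "S $$ (i,j) = (\<Sum>k<n. Q $$ (i,k) * d k * Q $$ (j,k))"
proof -
  have "S = S * (Q * transpose_mat Q)" unfolding QQt using S by simp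
  also have "\<dots> = (S * Q) * transpose_mat Q" using S Q
    by (metis assoc_mult_mat transpose_carrier_mat)
  also have "\<dots> = (Q * D) * transpose_mat Q" unfolding SQ ..
  finally have "S $$ (i,j) = ((Q * D) * transpose_mat Q) $$ (i,j)" by simp
  also have "\<dots> = (\<Sum>k<n. (Q * D) $$ (i,k) * Q $$ (j,k))"
    using assms Q D by (subst mm_idx[where m=n]) auto
  also have "\<dots> = (\<Sum>k<n. Q $$ (i,k) * d k * Q $$ (j,k))"
    by (rule sum.cong, insert assms QD_idx, auto)
  finally show ?thesis .
qed

lemma d_le: assumes k: "k < n" shows "d k \<le> rho"
proof -
  let ?x = "col Q k"
  have x: "?x \<in> carrier_vec n" using Q by auto
  have "S *\<^sub>v ?x = d k \<cdot>\<^sub>v ?x"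
  proof (rule eq_vecI)
    fix i assume i: "i < dim_vec (d k \<cdot>\<^sub>v ?x)"
    hence i: "i < n" using Q by auto
    have "(S *\<^sub>v ?x) $ i = (S * Q) $$ (i,k)" using S Q i k by auto
    also have "\<dots> = Q $$ (i,k) * d k" unfolding SQ using QD_idx i k by auto
    finally show "(S *\<^sub>v ?x) $ i = (d k \<cdot>\<^sub>v ?x) $ i" using i k Q by auto
  qed (insert S Q, auto)
  moreover have "?x \<noteq> 0\<^sub>v n"
  proof
    assume "?x = 0\<^sub>v n"
    hence "\<forall>j<n. Q $$ (j,k) = 0" using Q k
      by (metis carrier_matD(1) carrier_matD(2) index_col index_zero_vec(1))
    hence "(\<Sum>j<n. Q $$ (j,k) * Q $$ (j,k)) = 0" by simp
    thus False using O1[OF k k] by simp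
  qed
  ultimately have "\<bar>d k\<bar> \<le> rho" using real_eig_le[OF S x] by auto
  thus ?thesis by simp
qed

definition "y f k = (\<Sum>i<n. Q $$ (i,k) * f i)"

lemma Sf: assumes i: "i < n"
  shows "(\<Sum>j<n. S $$ (i,j) * f j) = (\<Sum>k<n. Q $$ (i,k) * d k * y f k)"
proof -
  have "(\<Sum>j<n. S $$ (i,j) * f j) = (\<Sum>j<n. \<Sum>k<n. Q $$ (i,k) * d k * Q $$ (j,k) * f j)"
    by (rule sum.cong[OF refl], simp add: S_idx[OF i] sum_distrib_right)
  also have "\<dots> = (\<Sum>k<n. \<Sum>j<n. Q $$ (i,k) * d k * Q $$ (j,k) * f j)" by (rule sum.swap)
  also have "\<dots> = (\<Sum>k<n. Q $$ (i,k) * d k * y f k)"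
    by (simp add: y_def sum_distrib_left mult.assoc)
  finally show ?thesis .
qed

end

context pfctx begin
lemma recon: assumes i: "i < n" shows "(\<Sum>k<n. Q $$ (i,k) * y f k) = f i"
proof -
  have "(\<Sum>k<n. Q $$ (i,k) * y f k) = (\<Sum>k<n. \<Sum>j<n. f j * (Q $$ (i,k) * Q $$ (j,k)))"
    by (simp add: y_def sum_distrib_left mult_ac)
  also have "\<dots> = (\<Sum>j<n. f j * (\<Sum>k<n. Q $$ (i,k) * Q $$ (j,k)))"
    by (subst sum.swap) (simp add: sum_distrib_left)
  also have "\<dots> = (\<Sum>j<n. f j * (if i = j then 1 else 0))"
    by (rule sum.cong[OF refl], simp add: O2[OF i])
  also have "\<dots> = f i" using i by (simp add: if_distrib cong: if_cong)
  finally show ?thesis .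
qed

lemma quad: "(\<Sum>i<n. \<Sum>j<n. f i * S $$ (i,j) * f j) = (\<Sum>k<n. d k * (y f k)^2)"
proof -
  have "(\<Sum>i<n. \<Sum>j<n. f i * S $$ (i,j) * f j) = (\<Sum>i<n. f i * (\<Sum>j<n. S $$ (i,j) * f j))"
    by (simp add: sum_distrib_left mult.assoc)
  also have "\<dots> = (\<Sum>i<n. f i * (\<Sum>k<n. Q $$ (i,k) * d k * y f k))"
    by (rule sum.cong[OF refl], simp add: Sf)
  also have "\<dots> = (\<Sum>k<n. \<Sum>i<n. d k * y f k * (Q $$ (i,k) * f i))"
    by (simp add: sum_distrib_left mult_ac) (rule sum.swap)
  also have "\<dots> = (\<Sum>k<n. d k * (y f k)^2)"
    by (simp add: y_def sum_distrib_left[symmetric] power2_eq_square mult.assoc)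
  finally show ?thesis .
qed

lemma normeq: "(\<Sum>i<n. (f i)^2) = (\<Sum>k<n. (y f k)^2)"
proof -
  have "(\<Sum>k<n. (y f k)^2) = (\<Sum>k<n. \<Sum>i<n. y f k * (Q $$ (i,k) * f i))"
    by (simp add: power2_eq_square y_def[of f] sum_distrib_left)
  also have "\<dots> = (\<Sum>i<n. f i * (\<Sum>k<n. Q $$ (i,k) * y f k))"
    by (subst sum.swap) (simp add: sum_distrib_left mult_ac)
  also have "\<dots> = (\<Sum>i<n. (f i)^2)"
    by (rule sum.cong[OF refl], simp add: recon power2_eq_square)
  finally show ?thesis by simp
qed

lemma ray_le: "(\<Sum>i<n. \<Sum>j<n. f i * S $$ (i,j) * f j) \<le> rho * (\<Sum>i<n. (f i)^2)"
proof -
  have "(\<Sum>k<n. d k * (y f k)^2) \<le> (\<Sum>k<n. rho * (y f k)^2)"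
    by (rule sum_mono) (simp add: d_le mult_right_mono)
  thus ?thesis unfolding quad normeq[of f] sum_distrib_left .
qed

lemma ray_eq: assumes eq: "(\<Sum>i<n. \<Sum>j<n. f i * S $$ (i,j) * f j) = rho * (\<Sum>i<n. (f i)^2)"
  and i: "i < n"
  shows "(\<Sum>j<n. S $$ (i,j) * f j) = rho * f i"
proof -
  have e: "(\<Sum>k<n. d k * (y f k)^2) = (\<Sum>k<n. rho * (y f k)^2)"
    using eq unfolding quad normeq[of f] sum_distrib_left .
  have "(\<Sum>k<n. (rho - d k) * (y f k)^2) = (\<Sum>k<n. rho * (y f k)^2) - (\<Sum>k<n. d k * (y f k)^2)"
    by (simp only: left_diff_distrib sum_subtractf)
  hence "(\<Sum>k<n. (rho - d k) * (y f k)^2) = 0" using e by simp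
  moreover have "\<forall>k\<in>{..<n}. 0 \<le> (rho - d k) * (y f k)^2" using d_le by simp
  ultimately have z: "\<forall>k\<in>{..<n}. (rho - d k) * (y f k)^2 = 0"
    using sum_nonneg_eq_0_iff[of "{..<n}" "\<lambda>k. (rho - d k) * (y f k)^2"] by simp
  have dk: "d k * y f k = rho * y f k" if k: "k < n" for k
  proof -
    have "(rho - d k) * (y f k)^2 = 0" using z k by blast
    hence "rho - d k = 0 \<or> y f k = 0" by simp
    thus ?thesis by auto
  qed
  have "(\<Sum>j<n. S $$ (i,j) * f j) = (\<Sum>k<n. Q $$ (i,k) * (d k * y f k))" unfolding Sf[OF i]
    by (simp add: mult.assoc)
  also have "\<dots> = (\<Sum>k<n. rho * (Q $$ (i,k) * y f k))" by (rule sum.cong[OF refl]) (simp add: dk)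
  also have "\<dots> = rho * f i" by (simp add: sum_distrib_left[symmetric] recon[OF i])
  finally show ?thesis .
qed

end


lemma propag:
  fixes S :: "real mat"
  assumes S: "S \<in> carrier_mat n n" and nn: "nonneg_mat S" and irr: "irreducible_mat S"
    and x0: "\<forall>i<n. x i \<ge> 0" and ev: "\<forall>i<n. (\<Sum>j<n. S $$ (i,j) * x j) = r * x i"
    and i: "i < n" and xi: "x i = 0" and j: "j < n"
  shows "x j = 0"
proof -
  have stp: "x b = 0" if ab: "(a,b) \<in> mat_graph S" and xa: "x a = 0" for a b
  proof -
    from ab S have a: "a < n" and b: "b < n" and Sab: "S $$ (a,b) \<noteq> 0"
      unfolding mat_graph_def by auto
    have "(\<Sum>j<n. S $$ (a,j) * x j) = 0" using ev a xa by simp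
    moreover have "\<forall>j\<in>{..<n}. 0 \<le> S $$ (a,j) * x j"
      using nn x0 a S unfolding nonneg_mat_def by auto
    ultimately have "\<forall>j\<in>{..<n}. S $$ (a,j) * x j = 0"
      using sum_nonneg_eq_0_iff[of "{..<n}" "\<lambda>j. S $$ (a,j) * x j"] by simp
    thus ?thesis using b Sab by auto
  qed
  show ?thesis
  proof (cases "i = j")
    case True thus ?thesis using xi by simp
  next
    case False
    with irr i j S have "(i,j) \<in> (mat_graph S)\<^sup>+" unfolding irreducible_mat_def by auto
    thus ?thesis
    proof (induct rule: trancl_induct)
      case (base y) thus ?case using stp xi by blast
    next
      case (step y z) thus ?case using stp by blast
    qed
  qed
qed

context pfctx begin

lemma d0: "0 < n \<Longrightarrow> d 0 = rho" using Q_first unfolding d_def D_def by simp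

lemma Sv: assumes n: "0 < n" and i: "i < n" shows "(\<Sum>j<n. S $$ (i,j) * Q $$ (j,0)) = rho * Q $$ (i,0)"
proof -
  have "(\<Sum>j<n. S $$ (i,j) * Q $$ (j,0)) = (S * Q) $$ (i,0)" using mm_idx[OF S Q i n] by simp
  also have "\<dots> = Q $$ (i,0) * d 0" unfolding SQ using QD_idx[OF i n] .
  finally show ?thesis using d0[OF n] by simp
qed

lemma NZ:
  assumes nn: "nonneg_mat S" and irr: "irreducible_mat S"
    and ev: "\<forall>i<n. (\<Sum>j<n. S $$ (i,j) * w j) = rho * w i"
    and i0: "i0 < n" and wi: "w i0 = 0" and j: "j < n"
  shows "w j = 0"
proof -
  define a where "a i = \<bar>w i\<bar>" for i
  have "(\<Sum>i<n. \<Sum>j<n. w i * S $$ (i,j) * w j) \<le> (\<Sum>i<n. \<Sum>j<n. a i * S $$ (i,j) * a j)"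
  proof (intro sum_mono)
    fix i j assume i: "i \<in> {..<n}" and j: "j \<in> {..<n}"
    have S0: "S $$ (i,j) \<ge> 0" using nn i j S unfolding nonneg_mat_def by auto
    have "w i * S $$ (i,j) * w j = (w i * w j) * S $$ (i,j)" by simp
    also have "\<dots> \<le> \<bar>w i * w j\<bar> * S $$ (i,j)" by (rule mult_right_mono[OF abs_ge_self S0])
    also have "\<dots> = a i * S $$ (i,j) * a j" by (simp add: a_def abs_mult)
    finally show "w i * S $$ (i,j) * w j \<le> a i * S $$ (i,j) * a j" .
  qed
  moreover have "(\<Sum>i<n. \<Sum>j<n. w i * S $$ (i,j) * w j) = rho * (\<Sum>i<n. (w i)^2)"
  proof -
    have "(\<Sum>i<n. \<Sum>j<n. w i * S $$ (i,j) * w j) = (\<Sum>i<n. w i * (\<Sum>j<n. S $$ (i,j) * w j))"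
      by (simp add: sum_distrib_left mult.assoc)
    also have "\<dots> = (\<Sum>i<n. rho * (w i)^2)"
      by (rule sum.cong[OF refl]) (simp add: ev power2_eq_square)
    finally show ?thesis by (simp add: sum_distrib_left)
  qed
  moreover have "rho * (\<Sum>i<n. (a i)^2) = rho * (\<Sum>i<n. (w i)^2)" by (simp add: a_def)
  ultimately have eqa: "(\<Sum>i<n. \<Sum>j<n. a i * S $$ (i,j) * a j) = rho * (\<Sum>i<n. (a i)^2)"
    using ray_le[of a] by linarith
  have eva: "\<forall>i<n. (\<Sum>j<n. S $$ (i,j) * a j) = rho * a i"
    using ray_eq[of a, OF eqa] by blast
  have a0: "\<forall>i<n. 0 \<le> a i" by (simp add: a_def)
  have ai0: "a i0 = 0" using wi by (simp add: a_def)
  have "a j = 0" by (rule propag[OF S nn irr a0 eva i0 ai0 j])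
  thus ?thesis by (simp add: a_def)
qed

end



lemma skew_quad:
  fixes K :: "real mat"
  assumes sk: "\<forall>i<n. \<forall>j<n. K $$ (j,i) = - K $$ (i,j)"
  shows "(\<Sum>i<n. \<Sum>j<n. p i * K $$ (i,j) * p j) = 0"
proof -
  let ?X = "(\<Sum>i<n. \<Sum>j<n. p i * K $$ (i,j) * p j)"
  have "?X = (\<Sum>j<n. \<Sum>i<n. p i * K $$ (i,j) * p j)" by (rule sum.swap)
  also have "\<dots> = (\<Sum>j<n. \<Sum>i<n. - (p j * K $$ (j,i) * p i))"
  proof (intro sum.cong refl)
    fix j i assume j: "j \<in> {..<n}" and i: "i \<in> {..<n}"
    have "K $$ (i,j) = - K $$ (j,i)" using sk[rule_format, of j i] i j by simp
    thus "p i * K $$ (i,j) * p j = - (p j * K $$ (j,i) * p i)" by simp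
  qed
  also have "\<dots> = - ?X" by (simp add: sum_negf)
  finally show ?thesis by simp
qed

lemma block_iff:
  fixes B :: "real mat"
  assumes n: "0 < n" and B: "B \<in> carrier_mat n n" and sk: "\<forall>i<n. \<forall>j<n. B $$ (j,i) = - B $$ (i,j)"
  shows "(\<exists>K2 \<in> carrier_mat (n - 1) (n - 1). transpose_mat K2 = - K2 \<and>
            B = four_block_mat (0\<^sub>m 1 1) (0\<^sub>m 1 (n - 1)) (0\<^sub>m (n - 1) 1) K2)
         \<longleftrightarrow> (\<forall>i<n. B $$ (i,0) = 0)"
proof
  assume "\<exists>K2 \<in> carrier_mat (n - 1) (n - 1). transpose_mat K2 = - K2 \<and>
            B = four_block_mat (0\<^sub>m 1 1) (0\<^sub>m 1 (n - 1)) (0\<^sub>m (n - 1) 1) K2"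
  then obtain K2 where K2: "K2 \<in> carrier_mat (n - 1) (n - 1)"
    and eq: "B = four_block_mat (0\<^sub>m 1 1) (0\<^sub>m 1 (n - 1)) (0\<^sub>m (n - 1) 1) K2" by blast
  show "\<forall>i<n. B $$ (i,0) = 0"
  proof (intro allI impI)
    fix i assume i: "i < n"
    show "B $$ (i,0) = 0" unfolding eq using i n K2 by auto
  qed
next
  assume z: "\<forall>i<n. B $$ (i,0) = 0"
  define K2 where "K2 = mat (n - 1) (n - 1) (\<lambda>(i,j). B $$ (i+1, j+1))"
  have K2: "K2 \<in> carrier_mat (n - 1) (n - 1)" unfolding K2_def by simp
  moreover have "transpose_mat K2 = - K2"
  proof (rule eq_matI)
    fix i j assume i: "i < dim_row (- K2)" and j: "j < dim_col (- K2)"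
    hence "i + 1 < n" "j + 1 < n" using K2 by auto
    hence "B $$ (j+1, i+1) = - B $$ (i+1, j+1)" using sk by blast
    thus "transpose_mat K2 $$ (i,j) = (- K2) $$ (i,j)" using i j K2 by (simp add: K2_def)
  qed (use K2 in auto)
  moreover have "B = four_block_mat (0\<^sub>m 1 1) (0\<^sub>m 1 (n - 1)) (0\<^sub>m (n - 1) 1) K2"
  proof (rule eq_matI)
    fix i j assume i: "i < dim_row (four_block_mat (0\<^sub>m 1 1) (0\<^sub>m 1 (n - 1)) (0\<^sub>m (n - 1) 1) K2)"
      and j: "j < dim_col (four_block_mat (0\<^sub>m 1 1) (0\<^sub>m 1 (n - 1)) (0\<^sub>m (n - 1) 1) K2)"
    from i j K2 n have i': "i < n" and j': "j < n" by auto
    show "B $$ (i,j) = four_block_mat (0\<^sub>m 1 1) (0\<^sub>m 1 (n - 1)) (0\<^sub>m (n - 1) 1) K2 $$ (i,j)"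
    proof (cases "i = 0 \<or> j = 0")
      case True
      have "B $$ (i,j) = 0"
      proof (cases "j = 0")
        case True thus ?thesis using z i' by simp
      next
        case False
        hence "i = 0" using \<open>i = 0 \<or> j = 0\<close> by simp
        have "B $$ (j,0) = 0" using z j' by simp
        moreover have "B $$ (j,0) = - B $$ (0,j)" using sk[rule_format, of 0 j] n j' by simp
        ultimately show ?thesis using \<open>i = 0\<close> by simp
      qed
      thus ?thesis using True i j K2 by auto
    next
      case False
      then obtain i1 j1 where "i = Suc i1" "j = Suc j1" by (metis not0_implies_Suc)
      thus ?thesis using i j K2 n i' j' by (auto simp: K2_def)
    qed
  qed (insert B K2 n, auto)
  ultimately show "\<exists>K2 \<in> carrier_mat (n - 1) (n - 1). transpose_mat K2 = - K2 \<and>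
            B = four_block_mat (0\<^sub>m 1 1) (0\<^sub>m 1 (n - 1)) (0\<^sub>m (n - 1) 1) K2" by blast
qed



lemma eigvec_nz:
  assumes "eigenvector (A :: complex mat) z mu" "A \<in> carrier_mat n n"
  shows "\<exists>i<n. z $ i \<noteq> 0"
proof (rule ccontr)
  assume a: "\<not> ?thesis"
  have z: "z \<in> carrier_vec n" and nz: "z \<noteq> 0\<^sub>v n"
    using assms unfolding eigenvector_def by auto
  have "z = 0\<^sub>v n"
  proof (rule eq_vecI)
    show "dim_vec z = dim_vec (0\<^sub>v n)" using z by simp
    fix i assume "i < dim_vec (0\<^sub>v n)"
    thus "z $ i = 0\<^sub>v n $ i" using a by simp
  qed
  thus False using nz by contradiction
qed

context pfctx begin

lemma key:
  fixes K :: "real mat" and s :: real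
  assumes K: "K \<in> carrier_mat n n" and sk: "\<forall>i<n. \<forall>j<n. K $$ (j,i) = - K $$ (i,j)"
    and nn: "\<forall>i<n. \<forall>j<n. 0 \<le> S $$ (i,j) + s * K $$ (i,j)"
    and ev: "eigenvector (map_mat complex_of_real (S + s \<cdot>\<^sub>m K)) z mu"
  shows "\<forall>i<n. norm mu * norm (z $ i) \<le> (\<Sum>j<n. (S $$ (i,j) + s * K $$ (i,j)) * norm (z $ j))"
    and "norm mu * (\<Sum>i<n. (norm (z $ i))^2) \<le> (\<Sum>i<n. \<Sum>j<n. norm (z $ i) * S $$ (i,j) * norm (z $ j))"
    and "norm mu \<le> rho"
proof -
  let ?M = "S + s \<cdot>\<^sub>m K"
  define p where "p i = norm (z $ i)" for i
  have M: "?M \<in> carrier_mat n n" using S K by simp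
  have Mij: "?M $$ (i,j) = S $$ (i,j) + s * K $$ (i,j)" if "i < n" "j < n" for i j
    using that S K by simp
  show a: "\<forall>i<n. norm mu * norm (z $ i) \<le> (\<Sum>j<n. (S $$ (i,j) + s * K $$ (i,j)) * norm (z $ j))"
  proof (intro allI impI)
    fix i assume i: "i < n"
    have "norm mu * norm (z $ i) \<le> (\<Sum>j<n. \<bar>?M $$ (i,j)\<bar> * norm (z $ j))"
      by (rule eig_bound[OF M ev i])
    also have "\<dots> = (\<Sum>j<n. (S $$ (i,j) + s * K $$ (i,j)) * norm (z $ j))"
      by (intro sum.cong refl) (simp add: Mij i nn)
    finally show "norm mu * norm (z $ i) \<le> (\<Sum>j<n. (S $$ (i,j) + s * K $$ (i,j)) * norm (z $ j))" .
  qed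
  have "norm mu * (\<Sum>i<n. (p i)^2) = (\<Sum>i<n. p i * (norm mu * p i))"
    by (simp add: sum_distrib_left power2_eq_square mult_ac)
  also have "\<dots> \<le> (\<Sum>i<n. p i * (\<Sum>j<n. (S $$ (i,j) + s * K $$ (i,j)) * p j))"
    by (intro sum_mono mult_left_mono) (use a in \<open>auto simp: p_def\<close>)
  also have "\<dots> = (\<Sum>i<n. \<Sum>j<n. p i * S $$ (i,j) * p j) + s * (\<Sum>i<n. \<Sum>j<n. p i * K $$ (i,j) * p j)"
  proof -
    have "p i * (\<Sum>j<n. (S $$ (i,j) + s * K $$ (i,j)) * p j)
        = (\<Sum>j<n. p i * S $$ (i,j) * p j) + s * (\<Sum>j<n. p i * K $$ (i,j) * p j)" for i
    proof -
      have "p i * (\<Sum>j<n. (S $$ (i,j) + s * K $$ (i,j)) * p j)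
          = (\<Sum>j<n. p i * S $$ (i,j) * p j + s * (p i * K $$ (i,j) * p j))"
        unfolding sum_distrib_left by (intro sum.cong refl) (simp add: algebra_simps)
      also have "\<dots> = (\<Sum>j<n. p i * S $$ (i,j) * p j) + s * (\<Sum>j<n. p i * K $$ (i,j) * p j)"
        by (simp add: sum.distrib sum_distrib_left)
      finally show ?thesis .
    qed
    thus ?thesis by (simp add: sum.distrib sum_distrib_left)
  qed
  also have "\<dots> = (\<Sum>i<n. \<Sum>j<n. p i * S $$ (i,j) * p j)" using skew_quad[OF sk] by simp
  finally have b: "norm mu * (\<Sum>i<n. (p i)^2) \<le> (\<Sum>i<n. \<Sum>j<n. p i * S $$ (i,j) * p j)" .
  thus "norm mu * (\<Sum>i<n. (norm (z $ i))^2) \<le> (\<Sum>i<n. \<Sum>j<n. norm (z $ i) * S $$ (i,j) * norm (z $ j))"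
    by (simp add: p_def)
  have pos: "(\<Sum>i<n. (p i)^2) > 0"
  proof -
    obtain i where i: "i < n" "z $ i \<noteq> 0" using eigvec_nz[OF ev] M by auto
    have "0 < (p i)^2" using i by (simp add: p_def)
    also have "\<dots> \<le> (\<Sum>i<n. (p i)^2)" by (rule member_le_sum) (use i in auto)
    finally show ?thesis .
  qed
  have "norm mu * (\<Sum>i<n. (p i)^2) \<le> rho * (\<Sum>i<n. (p i)^2)" using b ray_le[of p] by linarith
  thus "norm mu \<le> rho" using pos by simp
qed

end


lemma mv_idx: assumes "A \<in> carrier_mat nr m" "v \<in> carrier_vec m" "i < nr"
  shows "(A *\<^sub>v v) $ i = (\<Sum>k<m. A $$ (i,k) * v $ k)"
  using assms by (simp add: scalar_prod_def lessThan_atLeast0 mult_mat_vec_def)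

lemma Kv_block:
  fixes K Q :: "real mat"
  assumes n: "0 < n" and K: "K \<in> carrier_mat n n" and K_skew: "transpose_mat K = - K"
    and Q: "Q \<in> carrier_mat n n" and Q_orth: "transpose_mat Q * Q = 1\<^sub>m n"
  shows "(\<forall>i<n. (\<Sum>j<n. K $$ (i,j) * Q $$ (j,0)) = 0) \<longleftrightarrow>
    (\<exists>K2 \<in> carrier_mat (n - 1) (n - 1). transpose_mat K2 = - K2 \<and>
            transpose_mat Q * K * Q =
              four_block_mat (0\<^sub>m 1 1) (0\<^sub>m 1 (n - 1)) (0\<^sub>m (n - 1) 1) K2)"
proof -
  define B where "B = transpose_mat Q * K * Q"
  have Qt: "transpose_mat Q \<in> carrier_mat n n" using Q by simp
  have QQt: "Q * transpose_mat Q = 1\<^sub>m n"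
    using mat_mult_left_right_inverse[of "transpose_mat Q" n Q] Q Q_orth by simp
  have Bc: "B \<in> carrier_mat n n" unfolding B_def using Q K by simp
  have B2: "B = transpose_mat Q * (K * Q)" unfolding B_def using Q K Qt
    by (intro assoc_mult_mat) auto
  have "transpose_mat B = transpose_mat (K * Q) * Q" unfolding B2
    using transpose_mult[of "transpose_mat Q" n n "K * Q" n] Q K by simp
  also have "transpose_mat (K * Q) = transpose_mat Q * transpose_mat K"
    using transpose_mult[of K n n Q n] Q K by simp
  also have "\<dots> = - (transpose_mat Q * K)" unfolding K_skew
    by (rule uminus_mult_right_mat) (use Q K in auto)
  also have "- (transpose_mat Q * K) * Q = - B" unfolding B_def
    by (rule uminus_mult_left_mat) (use Q K in auto)
  finally have tB: "transpose_mat B = - B" .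
  have skB: "\<forall>i<n. \<forall>j<n. B $$ (j,i) = - B $$ (i,j)"
  proof (intro allI impI)
    fix i j assume i: "i < n" and j: "j < n"
    have "B $$ (j,i) = transpose_mat B $$ (i,j)" using Bc i j by simp
    also have "\<dots> = - B $$ (i,j)" unfolding tB using Bc i j by simp
    finally show "B $$ (j,i) = - B $$ (i,j)" .
  qed
  have KQ: "(K * Q) $$ (i,0) = (\<Sum>j<n. K $$ (i,j) * Q $$ (j,0))" if "i < n" for i
    using mm_idx[OF K Q that n] .
  have B0: "B $$ (i,0) = (\<Sum>k<n. Q $$ (k,i) * (K * Q) $$ (k,0))" if "i < n" for i
    unfolding B2 using mm_idx[OF Qt _ that n, of "K * Q"] K Q that by simp
  have QB: "Q * B = K * Q"
  proof -
    have "Q * B = (Q * transpose_mat Q) * (K * Q)" unfolding B2 using Q Qt K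
      by (intro assoc_mult_mat[symmetric]) auto
    thus ?thesis unfolding QQt using K Q by simp
  qed
  have "(\<forall>i<n. (\<Sum>j<n. K $$ (i,j) * Q $$ (j,0)) = 0) \<longleftrightarrow> (\<forall>i<n. B $$ (i,0) = 0)"
  proof
    assume h: "\<forall>i<n. (\<Sum>j<n. K $$ (i,j) * Q $$ (j,0)) = 0"
    show "\<forall>i<n. B $$ (i,0) = 0" using h by (simp add: B0 KQ)
  next
    assume h: "\<forall>i<n. B $$ (i,0) = 0"
    show "\<forall>i<n. (\<Sum>j<n. K $$ (i,j) * Q $$ (j,0)) = 0"
    proof (intro allI impI)
      fix i assume i: "i < n"
      have "(\<Sum>j<n. K $$ (i,j) * Q $$ (j,0)) = (K * Q) $$ (i,0)" using KQ i by simp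
      also have "\<dots> = (Q * B) $$ (i,0)" unfolding QB ..
      also have "\<dots> = (\<Sum>k<n. Q $$ (i,k) * B $$ (k,0))" using mm_idx[OF Q Bc i n] .
      also have "\<dots> = 0" using h by simp
      finally show "(\<Sum>j<n. K $$ (i,j) * Q $$ (j,0)) = 0" .
    qed
  qed
  also have "\<dots> \<longleftrightarrow> (\<exists>K2 \<in> carrier_mat (n - 1) (n - 1). transpose_mat K2 = - K2 \<and>
            B = four_block_mat (0\<^sub>m 1 1) (0\<^sub>m 1 (n - 1)) (0\<^sub>m (n - 1) 1) K2)"
    using block_iff[OF n Bc skB] by simp
  finally show ?thesis unfolding B_def .
qed



theorem corollary4:
  fixes S K Q :: "real mat" and n :: nat
  assumes n: "0 < n"
    and S: "S \<in> carrier_mat n n" and S_sym: "transpose_mat S = S"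
    and S_nonneg: "nonneg_mat S" and S_irr: "irreducible_mat S"
    and K: "K \<in> carrier_mat n n" and K_skew: "transpose_mat K = - K"
    and A_nonneg: "nonneg_mat (S + K)"
    and Q: "Q \<in> carrier_mat n n" and Q_orth: "transpose_mat Q * Q = 1\<^sub>m n"
    and Q_diag: "\<forall>i < n. \<forall>j < n. i \<noteq> j \<longrightarrow> (transpose_mat Q * S * Q) $$ (i, j) = 0"
    and Q_first: "(transpose_mat Q * S * Q) $$ (0, 0) = real_spectral_radius S"
  shows "(\<exists>c. \<forall>t \<in> {0..1::real}.
            real_spectral_radius ((1 - t) \<cdot>\<^sub>m (S + K) + t \<cdot>\<^sub>m transpose_mat (S + K)) = c)
     \<longleftrightarrow> (\<exists>K2 \<in> carrier_mat (n - 1) (n - 1). transpose_mat K2 = - K2 \<and>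
            transpose_mat Q * K * Q =
              four_block_mat (0\<^sub>m 1 1) (0\<^sub>m 1 (n - 1)) (0\<^sub>m (n - 1) 1) K2)"
proof -
  interpret pfctx S Q n using S S_sym Q Q_orth Q_diag Q_first by unfold_locales
  have skK: "\<forall>i<n. \<forall>j<n. K $$ (j,i) = - K $$ (i,j)"
  proof (intro allI impI)
    fix i j assume i: "i < n" and j: "j < n"
    have "K $$ (j,i) = transpose_mat K $$ (i,j)" using K i j by simp
    also have "\<dots> = - K $$ (i,j)" unfolding K_skew using K i j by simp
    finally show "K $$ (j,i) = - K $$ (i,j)" .
  qed
  have symS: "\<forall>i<n. \<forall>j<n. S $$ (j,i) = S $$ (i,j)"
  proof (intro allI impI)
    fix i j assume i: "i < n" and j: "j < n"
    have "S $$ (j,i) = transpose_mat S $$ (i,j)" using S i j by simp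
    also have "\<dots> = S $$ (i,j)" unfolding S_sym ..
    finally show "S $$ (j,i) = S $$ (i,j)" .
  qed
  have Mt: "(1 - t) \<cdot>\<^sub>m (S + K) + t \<cdot>\<^sub>m transpose_mat (S + K) = S + (1 - 2 * t) \<cdot>\<^sub>m K" for t
  proof (rule eq_matI)
    fix i j assume i: "i < dim_row (S + (1 - 2 * t) \<cdot>\<^sub>m K)" and j: "j < dim_col (S + (1 - 2 * t) \<cdot>\<^sub>m K)"
    hence i: "i < n" and j: "j < n" using S K by auto
    have e1: "S $$ (j,i) = S $$ (i,j)" using symS i j by blast
    have e2: "K $$ (j,i) = - K $$ (i,j)" using skK i j by blast
    show "((1 - t) \<cdot>\<^sub>m (S + K) + t \<cdot>\<^sub>m transpose_mat (S + K)) $$ (i,j) = (S + (1 - 2 * t) \<cdot>\<^sub>m K) $$ (i,j)"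
      using i j S K by (simp add: e1 e2 algebra_simps)
  qed (use S K in auto)
  have nnA: "0 \<le> S $$ (i,j) + K $$ (i,j)" if "i < n" "j < n" for i j
    using A_nonneg that S K unfolding nonneg_mat_def by auto
  have nns: "\<forall>i<n. \<forall>j<n. 0 \<le> S $$ (i,j) + s * K $$ (i,j)" if s: "-1 \<le> s" "s \<le> 1" for s
  proof (intro allI impI)
    fix i j assume i: "i < n" and j: "j < n"
    have a: "0 \<le> S $$ (i,j) + K $$ (i,j)" using nnA i j by blast
    have "0 \<le> S $$ (j,i) + K $$ (j,i)" using nnA i j by blast
    moreover have "S $$ (j,i) = S $$ (i,j)" using symS i j by blast
    moreover have "K $$ (j,i) = - K $$ (i,j)" using skK i j by blast
    ultimately have b: "0 \<le> S $$ (i,j) - K $$ (i,j)" by simp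
    have "S $$ (i,j) + s * K $$ (i,j) = (1 + s) / 2 * (S $$ (i,j) + K $$ (i,j)) + (1 - s) / 2 * (S $$ (i,j) - K $$ (i,j))"
      by (simp add: field_simps)
    also have "\<dots> \<ge> 0"
    proof -
      have "0 \<le> (1 + s) / 2 * (S $$ (i,j) + K $$ (i,j))" by (rule mult_nonneg_nonneg) (use a s in auto)
      moreover have "0 \<le> (1 - s) / 2 * (S $$ (i,j) - K $$ (i,j))" by (rule mult_nonneg_nonneg) (use b s in auto)
      ultimately show ?thesis by linarith
    qed
    finally show "0 \<le> S $$ (i,j) + s * K $$ (i,j)" .
  qed
  have Msc: "S + s \<cdot>\<^sub>m K \<in> carrier_mat n n" for s using S K by simp
  have rle: "real_spectral_radius (S + s \<cdot>\<^sub>m K) \<le> rho" if s: "-1 \<le> s" "s \<le> 1" for s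
  proof -
    let ?M = "map_mat complex_of_real (S + s \<cdot>\<^sub>m K)"
    have Mc: "?M \<in> carrier_mat n n" using Msc by simp
    from spectral_radius_mem_max(1)[OF Mc n] obtain mu where mu: "mu \<in> spectrum ?M"
      and r: "spectral_radius ?M = norm mu" by auto
    from mu obtain z where ev: "eigenvector ?M z mu" unfolding spectrum_def eigenvalue_def by auto
    have "norm mu \<le> rho" by (rule key(3)[OF K skK nns[OF s] ev])
    thus ?thesis unfolding real_spectral_radius_def r .
  qed
  have Sv': "\<forall>i<n. (\<Sum>j<n. S $$ (i,j) * Q $$ (j,0)) = rho * Q $$ (i,0)" using Sv n by blast
  have "(\<exists>c. \<forall>t \<in> {0..1::real}.
            real_spectral_radius ((1 - t) \<cdot>\<^sub>m (S + K) + t \<cdot>\<^sub>m transpose_mat (S + K)) = c)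
     \<longleftrightarrow> (\<forall>i<n. (\<Sum>j<n. K $$ (i,j) * Q $$ (j,0)) = 0)"
  proof (rule iffI)
    assume "\<exists>c. \<forall>t \<in> {0..1::real}.
            real_spectral_radius ((1 - t) \<cdot>\<^sub>m (S + K) + t \<cdot>\<^sub>m transpose_mat (S + K)) = c"
    then obtain c where c: "\<forall>t \<in> {0..1::real}.
            real_spectral_radius ((1 - t) \<cdot>\<^sub>m (S + K) + t \<cdot>\<^sub>m transpose_mat (S + K)) = c" by blast
    have e0: "S + (1 - 2 * (1/2::real)) \<cdot>\<^sub>m K = S" by (rule eq_matI) (use S K in auto)
    have e1: "S + (1 - 2 * (0::real)) \<cdot>\<^sub>m K = S + 1 \<cdot>\<^sub>m K" by simp
    have "c = rho" using c[rule_format, of "1/2"] unfolding Mt e0 by simp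
    moreover have "c = real_spectral_radius (S + 1 \<cdot>\<^sub>m K)" using c[rule_format, of 0] unfolding Mt e1 by simp
    ultimately have r1: "real_spectral_radius (S + 1 \<cdot>\<^sub>m K) = rho" by simp
    let ?M = "map_mat complex_of_real (S + 1 \<cdot>\<^sub>m K)"
    have Mc: "?M \<in> carrier_mat n n" using Msc by simp
    from spectral_radius_mem_max(1)[OF Mc n] obtain mu where mu: "mu \<in> spectrum ?M"
      and r: "spectral_radius ?M = norm mu" by auto
    from mu obtain z where ev: "eigenvector ?M z mu" unfolding spectrum_def eigenvalue_def by auto
    have nmu: "norm mu = rho" using r r1 unfolding real_spectral_radius_def by simp
    define p where "p i = norm (z $ i)" for i
    have nn1: "\<forall>i<n. \<forall>j<n. 0 \<le> S $$ (i,j) + 1 * K $$ (i,j)" using nns[of 1] by simp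
    note k = key[OF K skK nn1 ev, unfolded nmu]
    have ka: "rho * p i \<le> (\<Sum>j<n. S $$ (i,j) * p j) + (\<Sum>j<n. K $$ (i,j) * p j)" if i: "i < n" for i
    proof -
      have "rho * p i \<le> (\<Sum>j<n. (S $$ (i,j) + 1 * K $$ (i,j)) * p j)" using k(1) i unfolding p_def by blast
      also have "\<dots> = (\<Sum>j<n. S $$ (i,j) * p j) + (\<Sum>j<n. K $$ (i,j) * p j)"
        by (simp add: sum.distrib distrib_right)
      finally show ?thesis .
    qed
    have "rho * (\<Sum>i<n. (p i)^2) \<le> (\<Sum>i<n. \<Sum>j<n. p i * S $$ (i,j) * p j)" using k(2) unfolding p_def .
    hence eqp: "(\<Sum>i<n. \<Sum>j<n. p i * S $$ (i,j) * p j) = rho * (\<Sum>i<n. (p i)^2)"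
      using ray_le[of p] by linarith
    have Sp: "(\<Sum>j<n. S $$ (i,j) * p j) = rho * p i" if "i < n" for i
      by (rule ray_eq[OF eqp that])
    have Kp0: "0 \<le> (\<Sum>j<n. K $$ (i,j) * p j)" if "i < n" for i
      using ka[OF that] Sp[OF that] by simp
    have "(\<Sum>i<n. p i * (\<Sum>j<n. K $$ (i,j) * p j)) = (\<Sum>i<n. \<Sum>j<n. p i * K $$ (i,j) * p j)"
      by (simp add: sum_distrib_left mult.assoc)
    also have "\<dots> = 0" by (rule skew_quad[OF skK])
    finally have sum0: "(\<Sum>i<n. p i * (\<Sum>j<n. K $$ (i,j) * p j)) = 0" .
    have p0: "\<forall>i<n. 0 \<le> p i" by (simp add: p_def)
    have "\<forall>i\<in>{..<n}. 0 \<le> p i * (\<Sum>j<n. K $$ (i,j) * p j)"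
      using Kp0 p0 by simp
    hence prod0: "\<forall>i\<in>{..<n}. p i * (\<Sum>j<n. K $$ (i,j) * p j) = 0"
      using sum_nonneg_eq_0_iff[of "{..<n}" "\<lambda>i. p i * (\<Sum>j<n. K $$ (i,j) * p j)"] sum0 by simp
    obtain i1 where i1: "i1 < n" "z $ i1 \<noteq> 0" using eigvec_nz[OF ev Mc] by blast
    have ppos: "p i \<noteq> 0" if i: "i < n" for i
    proof
      assume pi0: "p i = 0"
      have sp: "\<forall>i<n. (\<Sum>j<n. S $$ (i,j) * p j) = rho * p i" using Sp by blast
      have "p i1 = 0" by (rule propag[OF S S_nonneg S_irr p0 sp i pi0 i1(1)])
      thus False using i1 by (simp add: p_def)
    qed
    have Kp: "(\<Sum>j<n. K $$ (i,j) * p j) = 0" if i: "i < n" for i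
    proof -
      have "p i * (\<Sum>j<n. K $$ (i,j) * p j) = 0" using prod0 i by blast
      thus ?thesis using ppos[OF i] by simp
    qed
    define w where "w i = p 0 * Q $$ (i,0) - Q $$ (0,0) * p i" for i
    have Sw: "\<forall>i<n. (\<Sum>j<n. S $$ (i,j) * w j) = rho * w i"
    proof (intro allI impI)
      fix i assume i: "i < n"
      have "(\<Sum>j<n. S $$ (i,j) * w j) = (\<Sum>j<n. p 0 * (S $$ (i,j) * Q $$ (j,0)) - Q $$ (0,0) * (S $$ (i,j) * p j))"
        by (intro sum.cong refl) (simp add: w_def right_diff_distrib mult_ac)
      also have "\<dots> = p 0 * (\<Sum>j<n. S $$ (i,j) * Q $$ (j,0)) - Q $$ (0,0) * (\<Sum>j<n. S $$ (i,j) * p j)"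
        by (simp add: sum_subtractf sum_distrib_left)
      also have "\<dots> = p 0 * (rho * Q $$ (i,0)) - Q $$ (0,0) * (rho * p i)"
        using Sv'[rule_format, OF i] Sp[OF i] by simp
      also have "\<dots> = rho * w i" by (simp add: w_def right_diff_distrib mult_ac)
      finally show "(\<Sum>j<n. S $$ (i,j) * w j) = rho * w i" .
    qed
    have w0: "w j = 0" if j: "j < n" for j
      by (rule NZ[OF S_nonneg S_irr Sw n _ j]) (simp add: w_def)
    have vp: "Q $$ (j,0) = (Q $$ (0,0) / p 0) * p j" if j: "j < n" for j
    proof -
      have e: "p 0 * Q $$ (j,0) = Q $$ (0,0) * p j" using w0[OF j] unfolding w_def by simp
      have "Q $$ (j,0) = (p 0 * Q $$ (j,0)) / p 0" using ppos[OF n] by simp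
      also have "\<dots> = (Q $$ (0,0) * p j) / p 0" unfolding e ..
      finally show ?thesis by simp
    qed
    show "\<forall>i<n. (\<Sum>j<n. K $$ (i,j) * Q $$ (j,0)) = 0"
    proof (intro allI impI)
      fix i assume i: "i < n"
      have "(\<Sum>j<n. K $$ (i,j) * Q $$ (j,0)) = (\<Sum>j<n. (Q $$ (0,0) / p 0) * (K $$ (i,j) * p j))"
      proof (intro sum.cong refl)
        fix j assume j: "j \<in> {..<n}"
        show "K $$ (i,j) * Q $$ (j,0) = (Q $$ (0,0) / p 0) * (K $$ (i,j) * p j)"
          unfolding vp[of j, OF j[simplified]] by simp
      qed
      also have "\<dots> = (Q $$ (0,0) / p 0) * (\<Sum>j<n. K $$ (i,j) * p j)" by (simp add: sum_distrib_left)
      also have "\<dots> = 0" using Kp[OF i] by simp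
      finally show "(\<Sum>j<n. K $$ (i,j) * Q $$ (j,0)) = 0" .
    qed
  next
    assume Kv: "\<forall>i<n. (\<Sum>j<n. K $$ (i,j) * Q $$ (j,0)) = 0"
    let ?v = "col Q 0"
    have vc: "?v \<in> carrier_vec n" using Q by (intro carrier_vecI) simp
    have vnz: "?v \<noteq> 0\<^sub>v n"
    proof
      assume v0: "?v = 0\<^sub>v n"
      have "\<forall>j<n. Q $$ (j,0) = 0"
      proof (intro allI impI)
        fix j assume j: "j < n"
        have "Q $$ (j,0) = ?v $ j" using Q j n by simp
        also have "\<dots> = 0" unfolding v0 using j by simp
        finally show "Q $$ (j,0) = 0" .
      qed
      hence "(\<Sum>j<n. Q $$ (j,0) * Q $$ (j,0)) = 0" by simp
      thus False using O1[OF n n] by simp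
    qed
    have rr: "real_spectral_radius ((1 - t) \<cdot>\<^sub>m (S + K) + t \<cdot>\<^sub>m transpose_mat (S + K)) = rho"
      if t: "t \<in> {0..1}" for t
    proof -
      define s where "s = 1 - 2 * t"
      have s: "-1 \<le> s" "s \<le> 1" using t unfolding s_def by auto
      have "(S + s \<cdot>\<^sub>m K) *\<^sub>v ?v = rho \<cdot>\<^sub>v ?v"
      proof (rule eq_vecI)
        fix i assume "i < dim_vec (rho \<cdot>\<^sub>v ?v)"
        hence i: "i < n" using Q by simp
        have "((S + s \<cdot>\<^sub>m K) *\<^sub>v ?v) $ i = (\<Sum>j<n. (S + s \<cdot>\<^sub>m K) $$ (i,j) * ?v $ j)"
          by (rule mv_idx[OF Msc vc i])
        also have "\<dots> = (\<Sum>j<n. S $$ (i,j) * Q $$ (j,0) + s * (K $$ (i,j) * Q $$ (j,0)))"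
        proof (intro sum.cong refl)
          fix j assume j: "j \<in> {..<n}"
          have e1: "(S + s \<cdot>\<^sub>m K) $$ (i,j) = S $$ (i,j) + s * K $$ (i,j)" using S K i j by simp
          have e2: "?v $ j = Q $$ (j,0)" using Q j n by simp
          show "(S + s \<cdot>\<^sub>m K) $$ (i,j) * ?v $ j = S $$ (i,j) * Q $$ (j,0) + s * (K $$ (i,j) * Q $$ (j,0))"
            unfolding e1 e2 by (simp add: distrib_right)
        qed
        also have "\<dots> = (\<Sum>j<n. S $$ (i,j) * Q $$ (j,0)) + s * (\<Sum>j<n. K $$ (i,j) * Q $$ (j,0))"
          by (simp add: sum.distrib sum_distrib_left)
        also have "\<dots> = rho * Q $$ (i,0)" using Kv[rule_format, OF i] Sv'[rule_format, OF i] by simp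
        finally show "((S + s \<cdot>\<^sub>m K) *\<^sub>v ?v) $ i = (rho \<cdot>\<^sub>v ?v) $ i" using i Q n by simp
      qed (use S K Q in simp)
      from real_eig_le[OF Msc vc vnz this] have "rho \<le> real_spectral_radius (S + s \<cdot>\<^sub>m K)" by simp
      with rle[OF s] have "real_spectral_radius (S + s \<cdot>\<^sub>m K) = rho" by simp
      thus ?thesis unfolding Mt s_def .
    qed
    show "\<exists>c. \<forall>t \<in> {0..1::real}.
            real_spectral_radius ((1 - t) \<cdot>\<^sub>m (S + K) + t \<cdot>\<^sub>m transpose_mat (S + K)) = c"
      by (rule exI[of _ rho], intro ballI rr)
  qed
  also have "\<dots> \<longleftrightarrow> (\<exists>K2 \<in> carrier_mat (n - 1) (n - 1). transpose_mat K2 = - K2 \<and>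
            transpose_mat Q * K * Q =
              four_block_mat (0\<^sub>m 1 1) (0\<^sub>m 1 (n - 1)) (0\<^sub>m (n - 1) 1) K2)"
    by (rule Kv_block[OF n K K_skew Q Q_orth])
  finally show ?thesis .
qed


end
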